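(* Let $G$ be a graph, $k$ a positive integer, $T\subseteq V(G)$ and $v\in T$. Let $(H,\ell)=\mathcal{C}^c_k(G,T)$. Construct a labeled graph $(H',\ell')$ as follows: for every node $x$ of $H$ set $\ell'(x)=\ell(x)|_{T\setminus\{v\}}$; then iteratively contract every edge between two nodes $x,y$ with $\ell'(x)=\ell'(y)$, assigning label $\ell'(z):=\ell'(x)$ to the resulting node $z$. Then $(H',\ell')=\mathcal{C}^c_k(G,T\setminus\{v\})$. Moreover, given any certificate $S$ for $(H,\ell)$, there is a certificate $S'$ for $(H',\ell')$ such that for every $k$-coloring $\gamma$ of $G$, the $\gamma$-node of $H'$ with respect to $S'$ is the node resulting from contracting the set of nodes that contains the $\gamma$-node of $H$ with respect to $S$.
   Context: A $k$-coloring of $G$ is a map $\alpha:V(G)\to\{1,\dots,k\}$ with $\alpha(u)\ne\alpha(v)$ for all edges $uv$. $\mathcal{C}_k(G)$ has the $k$-colorings as nodes, adjacent iff they differ on exactly one vertex. For $T\subseteq V(G)$, label each coloring $\gamma$ by $\gamma|_T$. A label component is a maximal set of colorings with the same label inducing a connected subgraph of $\mathcal{C}_k(G)$. The contracted solution graph $\mathcal{C}^c_k(G,T)=(H,\ell)$ has one node $x$ per label component $S_x$, distinct $x,y$ adjacent iff some $\gamma\in S_x,\gamma'\in S_y$ are adjacent in $\mathcal{C}_k(G)$, and $\ell(x)$ the common label on $S_x$; labeled graphs are identified up to label-preserving isomorphism. Contracting an edge $uv$ replaces $u,v$ by a new vertex adjacent to all former neighbors of $u$ or $v$ (no loops or multi-edges).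 A certificate for $(H,\ell)$ is an assignment of nonempty sets $S_x$ of $k$-colorings of $G$ to the nodes $x$ such that: the $S_x$ partition the $k$-colorings of $G$; $\gamma|_T=\ell(x)$ for $\gamma\in S_x$; adjacent nodes have distinct labels; each $S_x$ induces a connected subgraph of $\mathcal{C}_k(G)$; distinct $x,y$ are adjacent iff some $\gamma\in S_x$ and $\gamma'\in S_y$ are adjacent in $\mathcal{C}_k(G)$. The $\gamma$-node with respect to a certificate $S$ is the node $x$ with $\gamma\in S_x$. *)

theory Defs
  imports Main
begin

definition simple_graph :: "'v set \<Rightarrow> ('v \<Rightarrow> 'v \<Rightarrow> bool) \<Rightarrow> bool" where
  "simple_graph V E \<longleftrightarrow> finite V \<and> (\<forall>u w. E u w \<longrightarrow> E w u) \<and> (\<forall>u. \<not> E u u)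
     \<and> (\<forall>u w. E u w \<longrightarrow> u \<in> V \<and> w \<in> V)"

text \<open>k-colourings of G, as maps V -> {1..k}; extended by 0 outside V so that they are
  uniquely represented.\<close>
definition colorings :: "'v set \<Rightarrow> ('v \<Rightarrow> 'v \<Rightarrow> bool) \<Rightarrow> nat \<Rightarrow> ('v \<Rightarrow> nat) set" where
  "colorings V E k = {\<alpha>. (\<forall>u\<in>V. \<alpha> u \<in> {1..k}) \<and> (\<forall>u. u \<notin> V \<longrightarrow> \<alpha> u = 0)
      \<and> (\<forall>u\<in>V. \<forall>w\<in>V. E u w \<longrightarrow> \<alpha> u \<noteq> \<alpha> w)}"

definition recol_adj :: "('v \<Rightarrow> nat) \<Rightarrow> ('v \<Rightarrow> nat) \<Rightarrow> bool" where
  "recol_adj \<alpha> \<beta> \<longleftrightarrow> card {u. \<alpha> u \<noteq> \<beta> u} = 1"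

definition lab :: "'v set \<Rightarrow> ('v \<Rightarrow> nat) \<Rightarrow> ('v \<Rightarrow> nat)" where
  "lab T \<gamma> = (\<lambda>u. if u \<in> T then \<gamma> u else 0)"

definition induces_connected :: "('v \<Rightarrow> nat) set \<Rightarrow> bool" where
  "induces_connected S \<longleftrightarrow>
     (\<forall>\<alpha>\<in>S. \<forall>\<beta>\<in>S. (\<lambda>x y. x \<in> S \<and> y \<in> S \<and> recol_adj x y)\<^sup>*\<^sup>* \<alpha> \<beta>)"

definition same_label :: "'v set \<Rightarrow> ('v \<Rightarrow> nat) set \<Rightarrow> bool" where
  "same_label T S \<longleftrightarrow> (\<forall>\<alpha>\<in>S. \<forall>\<beta>\<in>S. lab T \<alpha> = lab T \<beta>)"

definition label_component ::
  "'v set \<Rightarrow> ('v \<Rightarrow> 'v \<Rightarrow> bool) \<Rightarrow> nat \<Rightarrow> 'v set \<Rightarrow> ('v \<Rightarrow> nat) set \<Rightarrow> bool" where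
  "label_component V E k T S \<longleftrightarrow>
     S \<noteq> {} \<and> S \<subseteq> colorings V E k \<and> same_label T S \<and> induces_connected S \<and>
     (\<forall>S'. S \<subseteq> S' \<and> S' \<subseteq> colorings V E k \<and> same_label T S' \<and> induces_connected S'
        \<longrightarrow> S' = S)"

definition csg_nodes ::
  "'v set \<Rightarrow> ('v \<Rightarrow> 'v \<Rightarrow> bool) \<Rightarrow> nat \<Rightarrow> 'v set \<Rightarrow> ('v \<Rightarrow> nat) set set" where
  "csg_nodes V E k T = {S. label_component V E k T S}"

definition csg_adj :: "('v \<Rightarrow> nat) set \<Rightarrow> ('v \<Rightarrow> nat) set \<Rightarrow> bool" where
  "csg_adj X Y \<longleftrightarrow> X \<noteq> Y \<and> (\<exists>\<gamma>\<in>X. \<exists>\<gamma>'\<in>Y. recol_adj \<gamma> \<gamma>')"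

definition csg_label :: "'v set \<Rightarrow> ('v \<Rightarrow> nat) set \<Rightarrow> ('v \<Rightarrow> nat)" where
  "csg_label T X = lab T (SOME \<gamma>. \<gamma> \<in> X)"

definition lg_iso ::
  "'a set \<Rightarrow> ('a \<Rightarrow> 'a \<Rightarrow> bool) \<Rightarrow> ('a \<Rightarrow> 'l) \<Rightarrow> 'b set \<Rightarrow> ('b \<Rightarrow> 'b \<Rightarrow> bool) \<Rightarrow> ('b \<Rightarrow> 'l) \<Rightarrow> bool"
  where
  "lg_iso N1 A1 L1 N2 A2 L2 \<longleftrightarrow>
     (\<exists>f. bij_betw f N1 N2 \<and> (\<forall>x\<in>N1. \<forall>y\<in>N1. A1 x y \<longleftrightarrow> A2 (f x) (f y))
          \<and> (\<forall>x\<in>N1. L1 x = L2 (f x)))"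

definition is_csg ::
  "'v set \<Rightarrow> ('v \<Rightarrow> 'v \<Rightarrow> bool) \<Rightarrow> nat \<Rightarrow> 'v set \<Rightarrow>
   'a set \<Rightarrow> ('a \<Rightarrow> 'a \<Rightarrow> bool) \<Rightarrow> ('a \<Rightarrow> ('v \<Rightarrow> nat)) \<Rightarrow> bool" where
  "is_csg V E k T N A L \<longleftrightarrow> lg_iso N A L (csg_nodes V E k T) csg_adj (csg_label T)"

definition certificate ::
  "'v set \<Rightarrow> ('v \<Rightarrow> 'v \<Rightarrow> bool) \<Rightarrow> nat \<Rightarrow> 'v set \<Rightarrow>
   'a set \<Rightarrow> ('a \<Rightarrow> 'a \<Rightarrow> bool) \<Rightarrow> ('a \<Rightarrow> ('v \<Rightarrow> nat)) \<Rightarrow> ('a \<Rightarrow> ('v \<Rightarrow> nat) set) \<Rightarrow> bool" where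
  "certificate V E k T N A L S \<longleftrightarrow>
     (\<forall>x\<in>N. S x \<noteq> {}) \<and>
     (\<Union>x\<in>N. S x) = colorings V E k \<and>
     (\<forall>x\<in>N. \<forall>y\<in>N. x \<noteq> y \<longrightarrow> S x \<inter> S y = {}) \<and>
     (\<forall>x\<in>N. \<forall>\<gamma>\<in>S x. lab T \<gamma> = L x) \<and>
     (\<forall>x\<in>N. \<forall>y\<in>N. A x y \<longrightarrow> L x \<noteq> L y) \<and>
     (\<forall>x\<in>N. induces_connected (S x)) \<and>
     (\<forall>x\<in>N. \<forall>y\<in>N. x \<noteq> y \<longrightarrow> (A x y \<longleftrightarrow> (\<exists>\<gamma>\<in>S x. \<exists>\<gamma>'\<in>S y. recol_adj \<gamma> \<gamma>')))"

text \<open>Nodes produced by contraction are represented by the set of original nodes of H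
  they were obtained from.\<close>
inductive contract_step ::
  "('n set set \<times> ('n set \<Rightarrow> 'n set \<Rightarrow> bool) \<times> ('n set \<Rightarrow> 'l)) \<Rightarrow>
   ('n set set \<times> ('n set \<Rightarrow> 'n set \<Rightarrow> bool) \<times> ('n set \<Rightarrow> 'l)) \<Rightarrow> bool" where
  "\<lbrakk> X \<in> N; Y \<in> N; X \<noteq> Y; A X Y; L X = L Y;
     N' = insert (X \<union> Y) (N - {X, Y});
     A' = (\<lambda>P Q. P \<in> N' \<and> Q \<in> N' \<and> P \<noteq> Q \<and>
            (if P = X \<union> Y then A X Q \<or> A Y Q
             else if Q = X \<union> Y then A P X \<or> A P Y
             else A P Q));
     L' = L(X \<union> Y := L X) \<rbrakk>
   \<Longrightarrow> contract_step (N, A, L) (N', A', L')"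

end

theory Submission
  imports Defs
begin

definition cr :: "('v \<Rightarrow> nat) set \<Rightarrow> ('v \<Rightarrow> nat) \<Rightarrow> ('v \<Rightarrow> nat) \<Rightarrow> bool" where
  "cr S = (\<lambda>x y. x \<in> S \<and> y \<in> S \<and> recol_adj x y)"

lemma ic_def: "induces_connected S \<longleftrightarrow> (\<forall>\<alpha>\<in>S. \<forall>\<beta>\<in>S. (cr S)\<^sup>*\<^sup>* \<alpha> \<beta>)"
  unfolding induces_connected_def cr_def by simp

lemma recol_adj_sym: "recol_adj a b \<Longrightarrow> recol_adj b a"
proof -
  have "{u. a u \<noteq> b u} = {u. b u \<noteq> a u}" by auto
  then show "recol_adj a b \<Longrightarrow> recol_adj b a" unfolding recol_adj_def by simp
qed

lemma rtranclp_sym_rel: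
  assumes sym: "\<And>a b. r a b \<Longrightarrow> r b a" and "r\<^sup>*\<^sup>* a b" shows "r\<^sup>*\<^sup>* b a"
  using assms(2)
proof (induction rule: rtranclp_induct)
  case base then show ?case by simp
next
  case (step y z)
  then show ?case by (metis converse_rtranclp_into_rtranclp sym)
qed

lemma cr_sym: "cr S a b \<Longrightarrow> cr S b a"
  unfolding cr_def using recol_adj_sym by blast

lemma cr_mono: assumes "S \<subseteq> S'" "(cr S)\<^sup>*\<^sup>* a b" shows "(cr S')\<^sup>*\<^sup>* a b"
  using assms(2)
proof (induction rule: rtranclp_induct)
  case base then show ?case by simp
next
  case (step y z)
  then have "cr S' y z" using assms(1) unfolding cr_def by blast
  with step show ?case by (meson rtranclp.rtrancl_into_rtrancl)
qed

lemma conn_union: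
  assumes cA: "induces_connected A" and cB: "induces_connected B"
    and a: "a \<in> A" and b: "b \<in> B" and ab: "a = b \<or> recol_adj a b"
  shows "induces_connected (A \<union> B)"
proof -
  have sA: "(cr (A \<union> B))\<^sup>*\<^sup>* \<alpha> \<beta>" if "\<alpha> \<in> A" "\<beta> \<in> A" for \<alpha> \<beta>
    using cA that cr_mono[of A "A \<union> B"] unfolding ic_def by blast
  have sB: "(cr (A \<union> B))\<^sup>*\<^sup>* \<alpha> \<beta>" if "\<alpha> \<in> B" "\<beta> \<in> B" for \<alpha> \<beta>
    using cB that cr_mono[of B "A \<union> B"] unfolding ic_def by blast
  have ab': "(cr (A \<union> B))\<^sup>*\<^sup>* a b"
  proof (cases "a = b")
    case True then show ?thesis by simp
  next
    case False
    then have "cr (A \<union> B) a b" using ab a b unfolding cr_def by blast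
    then show ?thesis by blast
  qed
  have ba': "(cr (A \<union> B))\<^sup>*\<^sup>* b a"
    using rtranclp_sym_rel[OF cr_sym ab'] .
  show ?thesis unfolding ic_def
  proof (intro ballI)
    fix \<alpha> \<beta> assume "\<alpha> \<in> A \<union> B" "\<beta> \<in> A \<union> B"
    then show "(cr (A \<union> B))\<^sup>*\<^sup>* \<alpha> \<beta>"
      using sA sB ab' ba' a b by (meson UnE rtranclp_trans)
  qed
qed

lemma lab_lab: "T' \<subseteq> T \<Longrightarrow> lab T' (lab T \<gamma>) = lab T' \<gamma>"
  unfolding lab_def by (auto simp: fun_eq_iff)

lemma certD:
  assumes "certificate V E k T N A L C"
  shows "\<forall>x\<in>N. C x \<noteq> {}"
    and "(\<Union>x\<in>N. C x) = colorings V E k"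
    and "\<forall>x\<in>N. \<forall>y\<in>N. x \<noteq> y \<longrightarrow> C x \<inter> C y = {}"
    and "\<forall>x\<in>N. \<forall>\<gamma>\<in>C x. lab T \<gamma> = L x"
    and "\<forall>x\<in>N. \<forall>y\<in>N. A x y \<longrightarrow> L x \<noteq> L y"
    and "\<forall>x\<in>N. induces_connected (C x)"
    and "\<forall>x\<in>N. \<forall>y\<in>N. x \<noteq> y \<longrightarrow> (A x y \<longleftrightarrow> (\<exists>\<gamma>\<in>C x. \<exists>\<gamma>'\<in>C y. recol_adj \<gamma> \<gamma>'))"
  using assms unfolding certificate_def by argo+

lemma cert_max:
  assumes cert: "certificate V E k T N A L C" and x: "x \<in> N"
    and sub: "C x \<subseteq> S'" and col: "S' \<subseteq> colorings V E k" and sl: "same_label T S'"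
    and con: "induces_connected S'"
  shows "S' = C x"
proof -
  note ne = certD(1)[OF cert]
  note cov = certD(2)[OF cert]
  note labs = certD(4)[OF cert]
  note adjl = certD(5)[OF cert]
  note adj = certD(7)[OF cert]
  obtain \<alpha> where \<alpha>: "\<alpha> \<in> C x" using ne x by blast
  have reach: "\<beta> \<in> C x" if "(cr S')\<^sup>*\<^sup>* \<alpha> \<beta>" for \<beta>
    using that
  proof (induction rule: rtranclp_induct)
    case base then show ?case using \<alpha> .
  next
    case (step b c)
    then have c: "c \<in> S'" "b \<in> S'" "recol_adj b c" unfolding cr_def by auto
    then have "c \<in> colorings V E k" using col by blast
    then obtain y where y: "y \<in> N" "c \<in> C y" using cov by blast
    show ?case
    proof (rule ccontr)
      assume "c \<notin> C x"
      then have "x \<noteq> y" using y by blast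
      then have "A x y" using adj x y step.IH c by blast
      then have "L x \<noteq> L y" using adjl x y by blast
      moreover have "lab T b = L x" "lab T c = L y" using labs x y step.IH by auto
      moreover have "lab T b = lab T c" using sl c unfolding same_label_def by blast
      ultimately show False by simp
    qed
  qed
  have "S' \<subseteq> C x"
  proof
    fix \<beta> assume "\<beta> \<in> S'"
    moreover have "\<alpha> \<in> S'" using \<alpha> sub by blast
    ultimately have "(cr S')\<^sup>*\<^sup>* \<alpha> \<beta>" using con unfolding ic_def by blast
    then show "\<beta> \<in> C x" by (rule reach)
  qed
  then show ?thesis using sub by blast
qed

lemma lcD:
  assumes "label_component V E k T K"
  shows "K \<noteq> {}" and "K \<subseteq> colorings V E k" and "same_label T K"
    and "induces_connected K"
    and "\<And>S'. K \<subseteq> S' \<Longrightarrow> S' \<subseteq> colorings V E k \<Longrightarrow> same_label T S' \<Longrightarrow> induces_connected S' \<Longrightarrow> S' = K"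
proof -
  have h: "K \<noteq> {} \<and> K \<subseteq> colorings V E k \<and> same_label T K \<and> induces_connected K \<and>
     (\<forall>S'. K \<subseteq> S' \<and> S' \<subseteq> colorings V E k \<and> same_label T S' \<and> induces_connected S'
        \<longrightarrow> S' = K)" using assms unfolding label_component_def .
  then show "K \<noteq> {}" "K \<subseteq> colorings V E k" "same_label T K" "induces_connected K" by simp_all
  fix S' assume "K \<subseteq> S'" "S' \<subseteq> colorings V E k" "same_label T S'" "induces_connected S'"
  then show "S' = K" using h by simp
qed

lemma cert_comp:
  assumes cert: "certificate V E k T N A L C" and x: "x \<in> N"
  shows "label_component V E k T (C x)"
proof -
  note ne = certD(1)[OF cert]
  note cov = certD(2)[OF cert]
  note labs = certD(4)[OF cert]
  note con = certD(6)[OF cert]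
  show ?thesis unfolding label_component_def
  proof (intro conjI allI impI)
    show "C x \<noteq> {}" using ne x by blast
    show "C x \<subseteq> colorings V E k" using cov x by blast
    show "same_label T (C x)" using labs x unfolding same_label_def by simp
    show "induces_connected (C x)" using con x by blast
    fix S' assume "C x \<subseteq> S' \<and> S' \<subseteq> colorings V E k \<and> same_label T S' \<and> induces_connected S'"
    then show "S' = C x" using cert_max[OF cert x] by blast
  qed
qed

lemma comp_eq_cert:
  assumes cert: "certificate V E k T N A L C" and K: "label_component V E k T K"
  shows "\<exists>x\<in>N. K = C x"
proof -
  note cov = certD(2)[OF cert]
  note labs = certD(4)[OF cert]
  note con = certD(6)[OF cert]
  note Kne = lcD(1)[OF K]
  note Kc = lcD(2)[OF K]
  note Ksl = lcD(3)[OF K]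
  note Kcon = lcD(4)[OF K]
  note Kmax = lcD(5)[OF K]
  obtain \<gamma> where g: "\<gamma> \<in> K" using Kne by blast
  then obtain x where x: "x \<in> N" "\<gamma> \<in> C x" using cov Kc by blast
  have cx: "induces_connected (C x)" using con x(1) by blast
  have c1: "induces_connected (C x \<union> K)" using conn_union[OF cx Kcon x(2) g] by simp
  have s1: "same_label T (C x \<union> K)"
    unfolding same_label_def
  proof (intro ballI)
    fix a b assume "a \<in> C x \<union> K" "b \<in> C x \<union> K"
    moreover have "\<forall>a\<in>C x \<union> K. lab T a = lab T \<gamma>"
    proof
      fix a assume "a \<in> C x \<union> K"
      then show "lab T a = lab T \<gamma>"
      proof
        assume "a \<in> C x"
        then have "lab T a = L x" using labs x(1) by blast
        moreover have "lab T \<gamma> = L x" using labs x by blast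
        ultimately show ?thesis by simp
      next
        assume "a \<in> K"
        then show ?thesis using Ksl g unfolding same_label_def by blast
      qed
    qed
    ultimately show "lab T a = lab T b" by simp
  qed
  have "C x \<union> K = K" using Kmax[OF _ _ s1 c1] cov x Kc by blast
  then have "C x \<subseteq> K" by blast
  then have "K = C x" using cert_max[OF cert x(1) _ Kc Ksl Kcon] by blast
  then show ?thesis using x by blast
qed

lemma cert_csg:
  assumes cert: "certificate V E k T N A L C"
  shows "is_csg V E k T N A L"
proof -
  note ne = certD(1)[OF cert]
  note disj = certD(3)[OF cert]
  note labs = certD(4)[OF cert]
  note adjl = certD(5)[OF cert]
  note adj = certD(7)[OF cert]
  have inj: "C x \<noteq> C y" if "x \<in> N" "y \<in> N" "x \<noteq> y" for x y
  proof -
    have "C x \<inter> C y = {}" using disj that by blast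
    moreover have "C x \<noteq> {}" using ne that(1) by blast
    ultimately show ?thesis by auto
  qed
  have bij: "bij_betw C N (csg_nodes V E k T)"
    unfolding bij_betw_def
  proof
    show "inj_on C N" using inj unfolding inj_on_def by blast
    show "C ` N = csg_nodes V E k T"
      using cert_comp[OF cert] comp_eq_cert[OF cert] unfolding csg_nodes_def by blast
  qed
  have adjs: "A x y \<longleftrightarrow> csg_adj (C x) (C y)" if "x \<in> N" "y \<in> N" for x y
  proof (cases "x = y")
    case True
    then show ?thesis using adjl that unfolding csg_adj_def by blast
  next
    case False
    then show ?thesis using adj inj that unfolding csg_adj_def by blast
  qed
  have labl: "L x = csg_label T (C x)" if "x \<in> N" for x
  proof -
    have "\<exists>\<gamma>. \<gamma> \<in> C x" using ne that by blast
    then have "(SOME \<gamma>. \<gamma> \<in> C x) \<in> C x" by (rule someI_ex)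
    then have "lab T (SOME \<gamma>. \<gamma> \<in> C x) = L x" using labs that by blast
    then show ?thesis unfolding csg_label_def by simp
  qed
  have "bij_betw C N (csg_nodes V E k T) \<and> (\<forall>x\<in>N. \<forall>y\<in>N. A x y \<longleftrightarrow> csg_adj (C x) (C y))
          \<and> (\<forall>x\<in>N. L x = csg_label T (C x))"
    using bij adjs labl by simp
  then show ?thesis unfolding is_csg_def lg_iso_def by (rule exI[where x=C])
qed

lemma comp_union_eq:
  assumes K1: "label_component V E k T K1" and K2: "label_component V E k T K2"
    and g: "\<gamma> \<in> K1" and g': "\<gamma>' \<in> K2" and adj: "\<gamma> = \<gamma>' \<or> recol_adj \<gamma> \<gamma>'"
    and l: "lab T \<gamma> = lab T \<gamma>'"
  shows "K1 = K2"
proof -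
  note c1 = lcD(2)[OF K1]
  note sl1 = lcD(3)[OF K1]
  note con1 = lcD(4)[OF K1]
  note max1 = lcD(5)[OF K1]
  note c2 = lcD(2)[OF K2]
  note sl2 = lcD(3)[OF K2]
  note con2 = lcD(4)[OF K2]
  note max2 = lcD(5)[OF K2]
  have cu: "induces_connected (K1 \<union> K2)" using conn_union[OF con1 con2 g g' adj] .
  have all: "\<forall>a\<in>K1 \<union> K2. lab T a = lab T \<gamma>"
  proof
    fix a assume "a \<in> K1 \<union> K2"
    then show "lab T a = lab T \<gamma>"
    proof
      assume "a \<in> K1" then show ?thesis using sl1 g unfolding same_label_def by blast
    next
      assume "a \<in> K2" then have "lab T a = lab T \<gamma>'" using sl2 g' unfolding same_label_def by blast
      then show ?thesis using l by simp
    qed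
  qed
  have su: "same_label T (K1 \<union> K2)" using all unfolding same_label_def by simp
  have "K1 \<union> K2 = K1" using max1[OF _ _ su cu] c1 c2 by blast
  moreover have "K1 \<union> K2 = K2" using max2[OF _ _ su cu] c1 c2 by blast
  ultimately show ?thesis by simp
qed

lemma comp_exists:
  assumes g: "\<gamma> \<in> colorings V E k"
  shows "\<exists>K. label_component V E k T K \<and> \<gamma> \<in> K"
proof -
  define R where "R = (\<lambda>a b. a \<in> colorings V E k \<and> b \<in> colorings V E k \<and>
      lab T a = lab T \<gamma> \<and> lab T b = lab T \<gamma> \<and> recol_adj a b)"
  define K where "K = {\<beta>. R\<^sup>*\<^sup>* \<gamma> \<beta>}"
  have Rsym: "R a b \<Longrightarrow> R b a" for a b unfolding R_def using recol_adj_sym by blast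
  have inK: "\<beta> \<in> colorings V E k \<and> lab T \<beta> = lab T \<gamma>" if "R\<^sup>*\<^sup>* \<gamma> \<beta>" for \<beta>
    using that
  proof (induction rule: rtranclp_induct)
    case base then show ?case using g by simp
  next
    case (step y z) then show ?case unfolding R_def by blast
  qed
  have gK: "\<gamma> \<in> K" unfolding K_def by simp
  have Kc: "K \<subseteq> colorings V E k" using inK unfolding K_def by blast
  have Ksl: "same_label T K" unfolding same_label_def
  proof (intro ballI)
    fix a b assume "a \<in> K" "b \<in> K"
    then have "R\<^sup>*\<^sup>* \<gamma> a" "R\<^sup>*\<^sup>* \<gamma> b" unfolding K_def by simp_all
    then have "lab T a = lab T \<gamma>" "lab T b = lab T \<gamma>" using inK by blast+
    then show "lab T a = lab T b" by simp
  qed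
  have path: "(cr K)\<^sup>*\<^sup>* \<gamma> \<beta>" if "R\<^sup>*\<^sup>* \<gamma> \<beta>" for \<beta>
    using that
  proof (induction rule: rtranclp_induct)
    case base then show ?case by simp
  next
    case (step y z)
    have yK: "y \<in> K" using step(1) unfolding K_def by simp
    have "R\<^sup>*\<^sup>* \<gamma> z" using step(1,2) by (metis rtranclp.rtrancl_into_rtrancl)
    then have zK: "z \<in> K" unfolding K_def by simp
    have "recol_adj y z" using step(2) unfolding R_def by blast
    then have "cr K y z" using yK zK unfolding cr_def by blast
    with step show ?case by (meson rtranclp.rtrancl_into_rtrancl)
  qed
  have Kcon: "induces_connected K" unfolding ic_def
  proof (intro ballI)
    fix a b assume "a \<in> K" "b \<in> K"
    then have "R\<^sup>*\<^sup>* \<gamma> a" "R\<^sup>*\<^sup>* \<gamma> b" unfolding K_def by simp_all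
    then have "(cr K)\<^sup>*\<^sup>* \<gamma> a" "(cr K)\<^sup>*\<^sup>* \<gamma> b" using path by blast+
    then have "(cr K)\<^sup>*\<^sup>* a \<gamma>" "(cr K)\<^sup>*\<^sup>* \<gamma> b"
      using rtranclp_sym_rel[of "cr K", OF cr_sym] by blast+
    then show "(cr K)\<^sup>*\<^sup>* a b" by (rule rtranclp_trans)
  qed
  have Kmax: "S' = K" if "K \<subseteq> S'" "S' \<subseteq> colorings V E k" "same_label T S'" "induces_connected S'" for S'
  proof -
    have "\<beta> \<in> K" if "(cr S')\<^sup>*\<^sup>* \<gamma> \<beta>" for \<beta>
      using that
    proof (induction rule: rtranclp_induct)
      case base then show ?case using gK .
    next
      case (step y z)
      then have yz: "y \<in> S'" "z \<in> S'" "recol_adj y z" unfolding cr_def by auto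
      have "\<gamma> \<in> S'" using gK \<open>K \<subseteq> S'\<close> by blast
      then have "R y z" unfolding R_def using yz \<open>S' \<subseteq> colorings V E k\<close> \<open>same_label T S'\<close>
        unfolding same_label_def by blast
      then show ?case using step.IH unfolding K_def by (simp add: rtranclp.rtrancl_into_rtrancl)
    qed
    moreover have "(cr S')\<^sup>*\<^sup>* \<gamma> \<beta>" if "\<beta> \<in> S'" for \<beta>
      using that gK \<open>K \<subseteq> S'\<close> \<open>induces_connected S'\<close> unfolding ic_def by blast
    ultimately show ?thesis using \<open>K \<subseteq> S'\<close> by blast
  qed
  have "label_component V E k T K"
    unfolding label_component_def
  proof (intro conjI allI impI)
    fix S' assume "K \<subseteq> S' \<and> S' \<subseteq> colorings V E k \<and> same_label T S' \<and> induces_connected S'"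
    then show "S' = K" using Kmax by blast
  qed (use gK Kc Ksl Kcon in auto)
  then show ?thesis using gK by blast
qed

lemma csg_cert:
  assumes "is_csg V E k T N A L"
  shows "\<exists>C. certificate V E k T N A L C"
proof -
  obtain g where bij: "bij_betw g N (csg_nodes V E k T)"
    and adj: "\<forall>x\<in>N. \<forall>y\<in>N. A x y \<longleftrightarrow> csg_adj (g x) (g y)"
    and lb: "\<forall>x\<in>N. L x = csg_label T (g x)"
    using assms unfolding is_csg_def lg_iso_def by blast
  have comp: "label_component V E k T (g x)" if "x \<in> N" for x
    using bij that unfolding bij_betw_def csg_nodes_def by blast
  have inj: "g x \<noteq> g y" if "x \<in> N" "y \<in> N" "x \<noteq> y" for x y
    using bij that unfolding bij_betw_def inj_on_def by blast
  have labs: "lab T \<gamma> = L x" if "x \<in> N" "\<gamma> \<in> g x" for x \<gamma>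
  proof -
    have s: "(SOME \<gamma>. \<gamma> \<in> g x) \<in> g x" using that(2) by (rule someI[of "\<lambda>y. y \<in> g x"])
    have "same_label T (g x)" using lcD(3)[OF comp[OF that(1)]] .
    then have e: "lab T \<gamma> = lab T (SOME \<gamma>. \<gamma> \<in> g x)" using s that(2) unfolding same_label_def by blast
    have "L x = lab T (SOME \<gamma>. \<gamma> \<in> g x)" using lb that(1) unfolding csg_label_def by blast
    then show ?thesis using e by simp
  qed
  have "certificate V E k T N A L g"
    unfolding certificate_def
  proof (intro conjI)
    show "\<forall>x\<in>N. g x \<noteq> {}" using lcD(1)[OF comp] by blast
    show "(\<Union>x\<in>N. g x) = colorings V E k"
    proof
      show "(\<Union>x\<in>N. g x) \<subseteq> colorings V E k" using lcD(2)[OF comp] by blast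
      show "colorings V E k \<subseteq> (\<Union>x\<in>N. g x)"
      proof
        fix \<gamma> assume "\<gamma> \<in> colorings V E k"
        then obtain K where "label_component V E k T K" "\<gamma> \<in> K" using comp_exists by blast
        then have "K \<in> g ` N" using bij unfolding bij_betw_def csg_nodes_def by blast
        then show "\<gamma> \<in> (\<Union>x\<in>N. g x)" using \<open>\<gamma> \<in> K\<close> by blast
      qed
    qed
    show "\<forall>x\<in>N. \<forall>y\<in>N. x \<noteq> y \<longrightarrow> g x \<inter> g y = {}"
    proof (intro ballI impI)
      fix x y assume xy: "x \<in> N" "y \<in> N" "x \<noteq> y"
      show "g x \<inter> g y = {}"
      proof (rule ccontr)
        assume "g x \<inter> g y \<noteq> {}"
        then obtain \<gamma> where "\<gamma> \<in> g x" "\<gamma> \<in> g y" by blast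
        then have "g x = g y" using comp_union_eq[OF comp[OF xy(1)] comp[OF xy(2)]] by blast
        then show False using inj xy by blast
      qed
    qed
    show "\<forall>x\<in>N. \<forall>\<gamma>\<in>g x. lab T \<gamma> = L x" using labs by blast
    show "\<forall>x\<in>N. \<forall>y\<in>N. A x y \<longrightarrow> L x \<noteq> L y"
    proof (intro ballI impI)
      fix x y assume xy: "x \<in> N" "y \<in> N" and "A x y"
      then have "csg_adj (g x) (g y)" using adj by blast
      then obtain \<gamma> \<gamma>' where gg: "g x \<noteq> g y" "\<gamma> \<in> g x" "\<gamma>' \<in> g y" "recol_adj \<gamma> \<gamma>'"
        unfolding csg_adj_def by blast
      show "L x \<noteq> L y"
      proof
        assume "L x = L y"
        then have "lab T \<gamma> = lab T \<gamma>'" using labs xy gg by simp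
        then have "g x = g y" using comp_union_eq[OF comp[OF xy(1)] comp[OF xy(2)]] gg by blast
        then show False using gg by simp
      qed
    qed
    show "\<forall>x\<in>N. induces_connected (g x)" using lcD(4)[OF comp] by blast
    show "\<forall>x\<in>N. \<forall>y\<in>N. x \<noteq> y \<longrightarrow> (A x y \<longleftrightarrow> (\<exists>\<gamma>\<in>g x. \<exists>\<gamma>'\<in>g y. recol_adj \<gamma> \<gamma>'))"
      using adj inj unfolding csg_adj_def by blast
  qed
  then show ?thesis by blast
qed

definition cinv :: "'n set \<Rightarrow> ('n \<Rightarrow> 'n \<Rightarrow> bool) \<Rightarrow> ('n \<Rightarrow> ('v \<Rightarrow> nat) set) \<Rightarrow> 'v set \<Rightarrow>
   ('n set set \<times> ('n set \<Rightarrow> 'n set \<Rightarrow> bool) \<times> ('n set \<Rightarrow> ('v \<Rightarrow> nat))) \<Rightarrow> bool" where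
  "cinv NH AH C T' st = (case st of (N, A, L0) \<Rightarrow>
     (\<forall>P\<in>N. P \<noteq> {} \<and> P \<subseteq> NH) \<and> \<Union>N = NH \<and> (\<forall>P\<in>N. \<forall>Q\<in>N. P \<noteq> Q \<longrightarrow> P \<inter> Q = {}) \<and>
     (\<forall>P Q. A P Q \<longleftrightarrow> P \<in> N \<and> Q \<in> N \<and> P \<noteq> Q \<and> (\<exists>x\<in>P. \<exists>y\<in>Q. AH x y)) \<and>
     (\<forall>P\<in>N. \<forall>\<gamma>\<in>\<Union>(C ` P). lab T' \<gamma> = L0 P) \<and>
     (\<forall>P\<in>N. induces_connected (\<Union>(C ` P))))"

lemma cinvD:
  assumes "cinv NH AH C T' (N, A, L0)"
  shows "\<forall>P\<in>N. P \<noteq> {} \<and> P \<subseteq> NH" and "\<Union>N = NH"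
    and "\<forall>P\<in>N. \<forall>Q\<in>N. P \<noteq> Q \<longrightarrow> P \<inter> Q = {}"
    and "\<forall>P Q. A P Q \<longleftrightarrow> P \<in> N \<and> Q \<in> N \<and> P \<noteq> Q \<and> (\<exists>x\<in>P. \<exists>y\<in>Q. AH x y)"
    and "\<forall>P\<in>N. \<forall>\<gamma>\<in>\<Union>(C ` P). lab T' \<gamma> = L0 P"
    and "\<forall>P\<in>N. induces_connected (\<Union>(C ` P))"
  using assms unfolding cinv_def prod.case by argo+

lemma step_inv:
  assumes cert: "certificate V E k T NH AH L C"
    and st: "contract_step (N, A, L0) (N2, A2, L2)"
    and inv: "cinv NH AH C T' (N, A, L0)"
  shows "cinv NH AH C T' (N2, A2, L2)"
proof -
  note cdisj = certD(3)[OF cert]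
  note cadj = certD(7)[OF cert]
  from st obtain X Y where X: "X \<in> N" "Y \<in> N" "X \<noteq> Y" "A X Y" and XL: "L0 X = L0 Y"
    and N2: "N2 = insert (X \<union> Y) (N - {X, Y})"
    and A2: "A2 = (\<lambda>P Q. P \<in> N2 \<and> Q \<in> N2 \<and> P \<noteq> Q \<and>
            (if P = X \<union> Y then A X Q \<or> A Y Q
             else if Q = X \<union> Y then A P X \<or> A P Y
             else A P Q))"
    and L2: "L2 = L0(X \<union> Y := L0 X)"
    by (cases rule: contract_step.cases) auto
  note ne = cinvD(1)[OF inv]
  note un = cinvD(2)[OF inv]
  note disj = cinvD(3)[OF inv]
  note adj = cinvD(4)[OF inv]
  note lb = cinvD(5)[OF inv]
  note con = cinvD(6)[OF inv]
  have XYn: "X \<union> Y \<notin> N - {X, Y}"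
  proof
    assume h: "X \<union> Y \<in> N - {X, Y}"
    then have h1: "X \<union> Y \<in> N" and h2: "X \<union> Y \<noteq> X" by blast+
    have "(X \<union> Y) \<inter> X = {}" using disj[rule_format, OF h1 X(1) h2] .
    moreover have "X \<noteq> {}" using ne[rule_format, OF X(1)] by simp
    ultimately show False by (simp add: Int_absorb1)
  qed
  have oth: "P \<in> N2 \<Longrightarrow> P \<noteq> X \<union> Y \<Longrightarrow> P \<in> N \<and> P \<noteq> X \<and> P \<noteq> Y" for P
    using N2 by blast
  have i1: "\<forall>P\<in>N2. P \<noteq> {} \<and> P \<subseteq> NH" using ne X N2 by blast
  have i2: "\<Union>N2 = NH" using un X N2 by blast
  have i3: "\<forall>P\<in>N2. \<forall>Q\<in>N2. P \<noteq> Q \<longrightarrow> P \<inter> Q = {}"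
  proof (intro ballI impI)
    fix P Q assume PQ: "P \<in> N2" "Q \<in> N2" "P \<noteq> Q"
    show "P \<inter> Q = {}"
    proof (cases "P = X \<union> Y")
      case True
      have "P \<noteq> Q" using PQ by simp
      then have Qn: "Q \<noteq> X \<union> Y" using True by simp
      then have Q: "Q \<in> N" "X \<noteq> Q" "Y \<noteq> Q" using oth[OF PQ(2)] by auto
      have "X \<inter> Q = {}" using disj[rule_format, OF X(1) Q(1) Q(2)] .
      moreover have "Y \<inter> Q = {}" using disj[rule_format, OF X(2) Q(1) Q(3)] .
      ultimately show ?thesis using True by (simp add: Int_Un_distrib2)
    next
      case False
      have P: "P \<in> N" "P \<noteq> X" "P \<noteq> Y" using oth[OF PQ(1) False] by simp_all
      show ?thesis
      proof (cases "Q = X \<union> Y")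
        case True
        have "P \<inter> X = {}" using disj[rule_format, OF P(1) X(1)] P(2) by simp
        moreover have "P \<inter> Y = {}" using disj[rule_format, OF P(1) X(2)] P(3) by simp
        ultimately show ?thesis using True by (simp add: Int_Un_distrib)
      next
        case False
        have qN: "Q \<in> N" using oth[OF PQ(2) False] by simp
        show ?thesis using disj[rule_format, OF P(1) qN PQ(3)] .
      qed
    qed
  qed
  have i4: "\<forall>P Q. A2 P Q \<longleftrightarrow> P \<in> N2 \<and> Q \<in> N2 \<and> P \<noteq> Q \<and> (\<exists>x\<in>P. \<exists>y\<in>Q. AH x y)"
  proof (intro allI)
    fix P Q
    show "A2 P Q \<longleftrightarrow> P \<in> N2 \<and> Q \<in> N2 \<and> P \<noteq> Q \<and> (\<exists>x\<in>P. \<exists>y\<in>Q. AH x y)"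
    proof (cases "P \<in> N2 \<and> Q \<in> N2 \<and> P \<noteq> Q")
      case False then show ?thesis unfolding A2 by auto
    next
      case True
      then have PQ: "P \<in> N2" "Q \<in> N2" "P \<noteq> Q" by auto
      show ?thesis
      proof (cases "P = X \<union> Y")
        case True
        then have Q: "Q \<in> N" "Q \<noteq> X" "Q \<noteq> Y" using oth PQ by auto
        have "A2 P Q = (A X Q \<or> A Y Q)" unfolding A2 using PQ True by simp
        also have "\<dots> = (\<exists>x\<in>P. \<exists>y\<in>Q. AH x y)" using adj Q X True by blast
        finally show ?thesis using PQ by simp
      next
        case False
        have P: "P \<in> N" "P \<noteq> X" "P \<noteq> Y" using oth[OF PQ(1) False] by simp_all
        show ?thesis
        proof (cases "Q = X \<union> Y")
          case True
          have "A2 P Q = (A P X \<or> A P Y)" unfolding A2 using PQ True False by simp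
          also have "\<dots> = (\<exists>x\<in>P. \<exists>y\<in>Q. AH x y)" using adj P X True by blast
          finally show ?thesis using PQ by simp
        next
          case F2: False
          have "A2 P Q = A P Q" unfolding A2 using PQ F2 False by simp
          also have "\<dots> = (\<exists>x\<in>P. \<exists>y\<in>Q. AH x y)" using adj P oth[OF PQ(2) F2] PQ by blast
          finally show ?thesis using PQ by simp
        qed
      qed
    qed
  qed
  have i5: "\<forall>P\<in>N2. \<forall>\<gamma>\<in>\<Union>(C ` P). lab T' \<gamma> = L2 P"
  proof (intro ballI)
    fix P \<gamma> assume P: "P \<in> N2" and g: "\<gamma> \<in> \<Union>(C ` P)"
    show "lab T' \<gamma> = L2 P"
    proof (cases "P = X \<union> Y")
      case True
      then have "L2 P = L0 X" unfolding L2 by simp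
      moreover have "\<gamma> \<in> \<Union>(C ` X) \<or> \<gamma> \<in> \<Union>(C ` Y)" using g True by blast
      ultimately show ?thesis using lb X(1,2) XL by auto
    next
      case False
      then have "L2 P = L0 P" unfolding L2 by simp
      have pN: "P \<in> N" using oth[OF P False] by simp
      then show ?thesis using lb[rule_format, OF pN g] \<open>L2 P = L0 P\<close> by simp
    qed
  qed
  have i6: "\<forall>P\<in>N2. induces_connected (\<Union>(C ` P))"
  proof
    fix P assume P: "P \<in> N2"
    show "induces_connected (\<Union>(C ` P))"
    proof (cases "P = X \<union> Y")
      case False
      have "P \<in> N" using oth[OF P False] by simp
      then show ?thesis using con by blast
    next
      case True
      obtain x y where xy: "x \<in> X" "y \<in> Y" "AH x y" using adj X by blast
      have "X \<inter> Y = {}" using disj[rule_format, OF X(1) X(2) X(3)] .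
      then have xny: "x \<noteq> y" using xy(1,2) by blast
      have xN: "x \<in> NH" using xy(1) ne[rule_format, OF X(1)] by blast
      have yN: "y \<in> NH" using xy(2) ne[rule_format, OF X(2)] by blast
      have "\<exists>\<gamma>\<in>C x. \<exists>\<gamma>'\<in>C y. recol_adj \<gamma> \<gamma>'" using cadj[rule_format, OF xN yN xny] xy(3) by simp
      then obtain \<gamma> \<gamma>' where gg: "\<gamma> \<in> C x" "\<gamma>' \<in> C y" "recol_adj \<gamma> \<gamma>'" by blast
      have g1: "\<gamma> \<in> \<Union>(C ` X)" using gg(1) xy(1) by blast
      have g2: "\<gamma>' \<in> \<Union>(C ` Y)" using gg(2) xy(2) by blast
      have "induces_connected (\<Union>(C ` X) \<union> \<Union>(C ` Y))"
        using conn_union[OF con[rule_format, OF X(1)] con[rule_format, OF X(2)] g1 g2] gg(3) by simp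
      moreover have "\<Union>(C ` P) = \<Union>(C ` X) \<union> \<Union>(C ` Y)" using True by blast
      ultimately show ?thesis by simp
    qed
  qed
  show ?thesis unfolding cinv_def using i1 i2 i3 i4 i5 i6 by simp
qed

lemma steps_inv:
  assumes cert: "certificate V E k T NH AH L C"
    and "contract_step\<^sup>*\<^sup>* s s'" and "cinv NH AH C T' s"
  shows "cinv NH AH C T' s'"
  using assms(2,3)
proof (induction rule: rtranclp_induct)
  case base then show ?case .
next
  case (step y z)
  obtain N A L0 where y: "y = (N, A, L0)" by (cases y) auto
  obtain N2 A2 L2 where z: "z = (N2, A2, L2)" by (cases z) auto
  show ?case using step_inv[OF cert] step y z by blast
qed

lemma init_inv:
  assumes cert: "certificate V E k T NH AH L C" and TT: "T' \<subseteq> T"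
  shows "cinv NH AH C T' ((\<lambda>x. {x}) ` NH,
            (\<lambda>P Q. \<exists>x\<in>NH. \<exists>y\<in>NH. P = {x} \<and> Q = {y} \<and> AH x y),
            (\<lambda>P. lab T' (L (THE x. P = {x}))))"
proof -
  note labs = certD(4)[OF cert]
  note adjl = certD(5)[OF cert]
  note con = certD(6)[OF cert]
  have the1: "(THE y. {x} = {y}) = x" for x :: 'a by (rule the_equality) auto
  have a: "\<forall>P Q. (\<exists>x\<in>NH. \<exists>y\<in>NH. P = {x} \<and> Q = {y} \<and> AH x y) \<longleftrightarrow>
      P \<in> (\<lambda>x. {x}) ` NH \<and> Q \<in> (\<lambda>x. {x}) ` NH \<and> P \<noteq> Q \<and> (\<exists>x\<in>P. \<exists>y\<in>Q. AH x y)"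
    using adjl by fastforce
  have l: "\<forall>P\<in>(\<lambda>x. {x}) ` NH. \<forall>\<gamma>\<in>\<Union>(C ` P). lab T' \<gamma> = lab T' (L (THE x. P = {x}))"
  proof (intro ballI)
    fix P \<gamma> assume "P \<in> (\<lambda>x. {x}) ` NH" "\<gamma> \<in> \<Union>(C ` P)"
    then obtain x where x: "x \<in> NH" "P = {x}" "\<gamma> \<in> C x" by blast
    have "lab T' \<gamma> = lab T' (lab T \<gamma>)" using lab_lab[OF TT] by simp
    also have "\<dots> = lab T' (L x)" using labs x by simp
    finally show "lab T' \<gamma> = lab T' (L (THE x. P = {x}))" using x the1 by simp
  qed
  show ?thesis unfolding cinv_def using a l con by auto
qed

lemma final_cert:
  assumes cert: "certificate V E k T NH AH L C"
    and inv: "cinv NH AH C T' (N, A, L0)"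
    and nm: "\<not> (\<exists>X\<in>N. \<exists>Y\<in>N. A X Y \<and> L0 X = L0 Y)"
  shows "certificate V E k T' N A L0 (\<lambda>X. \<Union>(C ` X))"
proof -
  note cne = certD(1)[OF cert]
  note cov = certD(2)[OF cert]
  note cdisj = certD(3)[OF cert]
  note cadj = certD(7)[OF cert]
  note ne = cinvD(1)[OF inv]
  note un = cinvD(2)[OF inv]
  note disj = cinvD(3)[OF inv]
  note adj = cinvD(4)[OF inv]
  note lb = cinvD(5)[OF inv]
  note con = cinvD(6)[OF inv]
  show ?thesis unfolding certificate_def
  proof (intro conjI)
    show "\<forall>x\<in>N. \<Union> (C ` x) \<noteq> {}"
    proof
      fix P assume P: "P \<in> N"
      then have "P \<noteq> {}" "P \<subseteq> NH" using ne by blast+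
      then obtain x where x: "x \<in> P" "x \<in> NH" by blast
      then have "C x \<noteq> {}" using cne by blast
      then show "\<Union> (C ` P) \<noteq> {}" using x(1) by blast
    qed
    have "(\<Union>x\<in>N. \<Union> (C ` x)) = (\<Union>x\<in>\<Union>N. C x)" by blast
    then show "(\<Union>x\<in>N. \<Union> (C ` x)) = colorings V E k" using un cov by simp
    show "\<forall>x\<in>N. \<forall>y\<in>N. x \<noteq> y \<longrightarrow> \<Union> (C ` x) \<inter> \<Union> (C ` y) = {}"
    proof (intro ballI impI)
      fix P Q assume PQ: "P \<in> N" "Q \<in> N" "P \<noteq> Q"
      have PQd: "P \<inter> Q = {}" using disj[rule_format, OF PQ] .
      show "\<Union> (C ` P) \<inter> \<Union> (C ` Q) = {}"
      proof (rule equals0I)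
        fix \<gamma> assume "\<gamma> \<in> \<Union> (C ` P) \<inter> \<Union> (C ` Q)"
        then obtain x y where xy: "x \<in> P" "\<gamma> \<in> C x" "y \<in> Q" "\<gamma> \<in> C y" by blast
        have xN: "x \<in> NH" using ne[rule_format, OF PQ(1)] xy(1) by blast
        have yN: "y \<in> NH" using ne[rule_format, OF PQ(2)] xy(3) by blast
        have "x \<noteq> y" using PQd xy(1,3) by blast
        then have "C x \<inter> C y = {}" using cdisj[rule_format, OF xN yN] by simp
        then show False using xy(2,4) by blast
      qed
    qed
    show "\<forall>x\<in>N. \<forall>\<gamma>\<in>\<Union> (C ` x). lab T' \<gamma> = L0 x" using lb .
    show "\<forall>x\<in>N. \<forall>y\<in>N. A x y \<longrightarrow> L0 x \<noteq> L0 y" using nm by blast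
    show "\<forall>x\<in>N. induces_connected (\<Union> (C ` x))" using con .
    show "\<forall>x\<in>N. \<forall>y\<in>N. x \<noteq> y \<longrightarrow>
        (A x y \<longleftrightarrow> (\<exists>\<gamma>\<in>\<Union> (C ` x). \<exists>\<gamma>'\<in>\<Union> (C ` y). recol_adj \<gamma> \<gamma>'))"
    proof (intro ballI impI)
      fix P Q assume PQ: "P \<in> N" "Q \<in> N" "P \<noteq> Q"
      have PQd: "P \<inter> Q = {}" using disj[rule_format, OF PQ] .
      have e: "AH x y \<longleftrightarrow> (\<exists>\<gamma>\<in>C x. \<exists>\<gamma>'\<in>C y. recol_adj \<gamma> \<gamma>')" if "x \<in> P" "y \<in> Q" for x y
      proof -
        have xN: "x \<in> NH" using ne[rule_format, OF PQ(1)] that(1) by blast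
        have yN: "y \<in> NH" using ne[rule_format, OF PQ(2)] that(2) by blast
        have "x \<noteq> y" using PQd that by blast
        then show ?thesis using cadj[rule_format, OF xN yN] by simp
      qed
      have a: "A P Q \<longleftrightarrow> (\<exists>x\<in>P. \<exists>y\<in>Q. AH x y)" using adj PQ by simp
      show "A P Q \<longleftrightarrow> (\<exists>\<gamma>\<in>\<Union> (C ` P). \<exists>\<gamma>'\<in>\<Union> (C ` Q). recol_adj \<gamma> \<gamma>')"
      proof
        assume "A P Q"
        then obtain x y where xy: "x \<in> P" "y \<in> Q" "AH x y" using a by blast
        then obtain \<gamma> \<gamma>' where "\<gamma> \<in> C x" "\<gamma>' \<in> C y" "recol_adj \<gamma> \<gamma>'" using e by blast
        then show "\<exists>\<gamma>\<in>\<Union> (C ` P). \<exists>\<gamma>'\<in>\<Union> (C ` Q). recol_adj \<gamma> \<gamma>'" using xy by blast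
      next
        assume "\<exists>\<gamma>\<in>\<Union> (C ` P). \<exists>\<gamma>'\<in>\<Union> (C ` Q). recol_adj \<gamma> \<gamma>'"
        then obtain x y \<gamma> \<gamma>' where xy: "x \<in> P" "\<gamma> \<in> C x" "y \<in> Q" "\<gamma>' \<in> C y" "recol_adj \<gamma> \<gamma>'"
          by blast
        then have "AH x y" using e[OF xy(1) xy(3)] by blast
        then show "A P Q" using a xy(1,3) by blast
      qed
    qed
  qed
qed

theorem lemma2:
  fixes V :: "'v set" and E :: "'v \<Rightarrow> 'v \<Rightarrow> bool" and k :: nat
    and T :: "'v set" and v :: 'v
    and NH :: "'n set" and AH :: "'n \<Rightarrow> 'n \<Rightarrow> bool" and L :: "'n \<Rightarrow> ('v \<Rightarrow> nat)"
    and N' :: "'n set set" and A' :: "'n set \<Rightarrow> 'n set \<Rightarrow> bool"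
    and L' :: "'n set \<Rightarrow> ('v \<Rightarrow> nat)"
  assumes "simple_graph V E" and "k \<ge> 1" and "T \<subseteq> V" and "v \<in> T"
    and "is_csg V E k T NH AH L"
    and "contract_step\<^sup>*\<^sup>*
           ((\<lambda>x. {x}) ` NH,
            (\<lambda>P Q. \<exists>x\<in>NH. \<exists>y\<in>NH. P = {x} \<and> Q = {y} \<and> AH x y),
            (\<lambda>P. lab (T - {v}) (L (THE x. P = {x}))))
           (N', A', L')"
    and "\<not> (\<exists>X\<in>N'. \<exists>Y\<in>N'. A' X Y \<and> L' X = L' Y)"
  shows "is_csg V E k (T - {v}) N' A' L'
    \<and> (\<forall>S. certificate V E k T NH AH L S \<longrightarrow>
          (\<exists>S'. certificate V E k (T - {v}) N' A' L' S' \<and>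
             (\<forall>\<gamma>\<in>colorings V E k. \<forall>x\<in>NH. \<forall>X\<in>N'.
                 \<gamma> \<in> S x \<longrightarrow> x \<in> X \<longrightarrow> \<gamma> \<in> S' X)))"
proof -
  have TT: "T - {v} \<subseteq> T" by blast
  have gen: "certificate V E k (T - {v}) N' A' L' (\<lambda>X. \<Union>(S ` X))"
    if cS: "certificate V E k T NH AH L S" for S
    using final_cert[OF cS steps_inv[OF cS assms(6) init_inv[OF cS TT]] assms(7)] .
  obtain C where cC: "certificate V E k T NH AH L C" using csg_cert[OF assms(5)] by blast
  have "is_csg V E k (T - {v}) N' A' L'" using cert_csg[OF gen[OF cC]] .
  moreover have "\<forall>S. certificate V E k T NH AH L S \<longrightarrow>
          (\<exists>S'. certificate V E k (T - {v}) N' A' L' S' \<and>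
             (\<forall>\<gamma>\<in>colorings V E k. \<forall>x\<in>NH. \<forall>X\<in>N'.
                 \<gamma> \<in> S x \<longrightarrow> x \<in> X \<longrightarrow> \<gamma> \<in> S' X))"
  proof (intro allI impI)
    fix S assume cS: "certificate V E k T NH AH L S"
    show "\<exists>S'. certificate V E k (T - {v}) N' A' L' S' \<and>
             (\<forall>\<gamma>\<in>colorings V E k. \<forall>x\<in>NH. \<forall>X\<in>N'.
                 \<gamma> \<in> S x \<longrightarrow> x \<in> X \<longrightarrow> \<gamma> \<in> S' X)"
      by (rule exI[of _ "\<lambda>X. \<Union>(S ` X)"]) (use gen[OF cS] in blast)
  qed
  ultimately show ?thesis by blast
qed

end
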